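(* For every $k\ge2$ and every $n\ge1$, the families $\mathrm{SLT}_k$ and $\mathrm{RL}_n^V$ are incomparable (neither is contained in the other); likewise, for every $n\ge1$, $\mathrm{SLT}$ and $\mathrm{RL}_n^V$ are incomparable.
   Context: Strictly locally testable languages: let $V$ be an alphabet and $k\ge1$. For $B,I,E\subseteq V^k$ and $F\subseteq V^{\le k-1}$, $\mathrm{slt}(B,I,E,F)$ is the language over $V$ consisting of all words in $F$ together with all words $a_1\cdots a_n$ ($a_i\in V$, $n\ge k$) with $a_1\cdots a_k\in B$, $a_{j+1}\cdots a_{j+k}\in I$ for all $1\le j\le n-k-1$, and $a_{n-k+1}\cdots a_n\in E$. $\mathrm{SLT}_k$ is the family of languages of this form and $\mathrm{SLT}=\bigcup_{k\ge1}\mathrm{SLT}_k$. A right-linear grammar is $G=(N,T,P,S)$ with rules $A\to wB$ or $A\to w$ ($A,B\in N$, $w\in T^*$). For a regular language $L$, $\mathrm{Var}_{RL}(L)$ is the minimum of $|N|$ over all right-linear grammars generating $L$; $\mathrm{RL}_n^V=\{L\text{ regular}:\mathrm{Var}_{RL}(L)\le n\}$. *)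

theory Defs
  imports Main
begin

text \<open>Letters are natural numbers (any finite alphabet embeds into nat);
  an alphabet is a finite set V of letters, words are lists.\<close>

type_synonym word = "nat list"
type_synonym language = "word set"

definition slt :: "nat set \<Rightarrow> nat \<Rightarrow> word set \<Rightarrow> word set \<Rightarrow> word set \<Rightarrow> word set \<Rightarrow> language" where
  "slt V k B I E F = F \<union>
     {w. w \<in> lists V \<and> length w \<ge> k \<and> take k w \<in> B
         \<and> (\<forall>j. 1 \<le> j \<and> j \<le> length w - k - 1 \<longrightarrow> take k (drop j w) \<in> I)
         \<and> drop (length w - k) w \<in> E}"

definition SLT_k :: "nat \<Rightarrow> language set" where
  "SLT_k k = {slt V k B I E F | V B I E F.
      finite V
      \<and> B \<subseteq> {w \<in> lists V. length w = k}
      \<and> I \<subseteq> {w \<in> lists V. length w = k}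
      \<and> E \<subseteq> {w \<in> lists V. length w = k}
      \<and> F \<subseteq> {w \<in> lists V. length w \<le> k - 1}}"

definition SLT :: "language set" where
  "SLT = (\<Union>k\<in>{k. k \<ge> 1}. SLT_k k)"

text \<open>Right-linear grammars: nonterminals are naturals. A rule (A, w, Some B) is
  A \<rightarrow> w B, a rule (A, w, None) is A \<rightarrow> w.\<close>

record rlgrammar =
  nonterms :: "nat set"
  terms :: "nat set"
  rules :: "(nat \<times> word \<times> nat option) set"
  start :: nat

definition rl_grammar :: "rlgrammar \<Rightarrow> bool" where
  "rl_grammar G \<longleftrightarrow> finite (nonterms G) \<and> finite (terms G) \<and> finite (rules G)
     \<and> start G \<in> nonterms G
     \<and> (\<forall>(A, w, X) \<in> rules G. A \<in> nonterms G \<and> w \<in> lists (terms G)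
            \<and> (\<forall>B. X = Some B \<longrightarrow> B \<in> nonterms G))"

inductive derives :: "rlgrammar \<Rightarrow> nat \<Rightarrow> word \<Rightarrow> bool" for G where
  term_rule: "(A, w, None) \<in> rules G \<Longrightarrow> derives G A w"
| cont_rule: "(A, w, Some B) \<in> rules G \<Longrightarrow> derives G B v \<Longrightarrow> derives G A (w @ v)"

definition lang :: "rlgrammar \<Rightarrow> language" where
  "lang G = {w. derives G (start G) w}"

definition regular :: "language \<Rightarrow> bool" where
  "regular L \<longleftrightarrow> (\<exists>G. rl_grammar G \<and> lang G = L)"

definition Var_RL :: "language \<Rightarrow> nat" where
  "Var_RL L = (LEAST m. \<exists>G. rl_grammar G \<and> lang G = L \<and> card (nonterms G) = m)"

definition RL_n :: "nat \<Rightarrow> language set" where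
  "RL_n n = {L. regular L \<and> Var_RL L \<le> n}"

end

theory Submission
  imports Defs
begin

inductive path :: "rlgrammar \<Rightarrow> nat \<Rightarrow> word \<Rightarrow> nat \<Rightarrow> bool" for G where
  prefl: "path G A [] A"
| pstep: "(A, w, Some C) \<in> rules G \<Longrightarrow> path G C v B \<Longrightarrow> path G A (w @ v) B"

lemma path_derives: "path G A x C \<Longrightarrow> derives G C y \<Longrightarrow> derives G A (x @ y)"
  by (induction rule: path.induct) (auto intro: derives.cont_rule)

lemma split_lemma:
  assumes "derives G A w" "\<forall>(A', u, X) \<in> rules G. length u \<le> M" "length w > M"
  shows "\<exists>C x y A' u. path G A x C \<and> derives G C y \<and> w = x @ y \<and> x \<noteq> [] \<and> y \<noteq> []
           \<and> (A', u, Some C) \<in> rules G"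
  using assms
proof (induction rule: derives.induct)
  case (term_rule A w)
  then show ?case by fastforce
next
  case (cont_rule A w B v)
  show ?case
  proof (cases "w = []")
    case True
    then have "length v > M" using cont_rule by simp
    then obtain C x y A' u where h: "path G B x C" "derives G C y" "v = x @ y" "x \<noteq> []" "y \<noteq> []"
        "(A', u, Some C) \<in> rules G" using cont_rule.IH cont_rule.prems(1) by blast
    have "path G A x C" using pstep[OF cont_rule.hyps(1) h(1)] True by simp
    then show ?thesis using h True by blast
  next
    case False
    show ?thesis
    proof (cases "v = []")
      case True
      then show ?thesis using cont_rule by fastforce
    next
      case F2: False
      have "path G A w B" using pstep[OF cont_rule.hyps(1) prefl] by simp
      then show ?thesis using False F2 cont_rule.hyps by blast
    qed
  qed
qed

definition Ln :: "nat \<Rightarrow> language" where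
  "Ln n = {replicate m i | i m. i \<le> n \<and> 1 \<le> m}"

lemma not_small:
  assumes G: "rl_grammar G" and L: "lang G = Ln n"
  shows "Suc n \<le> card (nonterms G)"
proof -
  have "finite ((\<lambda>(A,u,X). length u) ` rules G)" using G by (simp add: rl_grammar_def)
  then obtain M where M0: "\<forall>x \<in> (\<lambda>(A,u,X). length u) ` rules G. x \<le> M"
    using finite_nat_set_iff_bounded_le by blast
  have M: "\<forall>(A', u, X) \<in> rules G. length u \<le> M" using M0 by fastforce
  have ex: "\<exists>C. C \<in> nonterms G \<and> (\<exists>x y. path G (start G) x C \<and> derives G C y
              \<and> x @ y = replicate (Suc M) i \<and> x \<noteq> [] \<and> y \<noteq> [])" if "i \<in> {0..n}" for i
  proof -
    have "replicate (Suc M) i \<in> Ln n" using that unfolding Ln_def by fastforce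
    then have "replicate (Suc M) i \<in> lang G" using L by simp
    then have "derives G (start G) (replicate (Suc M) i)" by (simp add: lang_def)
    from split_lemma[OF this M] obtain C x y A' u where h: "path G (start G) x C" "derives G C y"
      "replicate (Suc M) i = x @ y" "x \<noteq> []" "y \<noteq> []" "(A', u, Some C) \<in> rules G" by auto
    have "C \<in> nonterms G" using G h(6) unfolding rl_grammar_def by fastforce
    then show ?thesis using h by metis
  qed
  then obtain f where f: "\<And>i. i \<in> {0..n} \<Longrightarrow> f i \<in> nonterms G \<and> (\<exists>x y. path G (start G) x (f i) \<and> derives G (f i) y
              \<and> x @ y = replicate (Suc M) i \<and> x \<noteq> [] \<and> y \<noteq> [])" by metis
  have "inj_on f {0..n}"
  proof (rule inj_onI)
    fix i l assume i: "i \<in> {0..n}" and l: "l \<in> {0..n}" and e: "f i = f l"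
    obtain x y where hx: "path G (start G) x (f i)" "x @ y = replicate (Suc M) i" "x \<noteq> []"
      using f[OF i] by blast
    obtain x' y' where hy: "derives G (f l) y'" "x' @ y' = replicate (Suc M) l" "y' \<noteq> []"
      using f[OF l] by blast
    have "derives G (start G) (x @ y')" using path_derives[OF hx(1)] hy(1) e by simp
    then have "x @ y' \<in> lang G" by (simp add: lang_def)
    then have "x @ y' \<in> Ln n" using L by simp
    then obtain j m where jm: "x @ y' = replicate m j" unfolding Ln_def by blast
    have "set (x @ y) = {i}" using hx(2) by (simp add: set_replicate_conv_if)
    then have sx: "set x = {i}" using hx(3) by (metis Un_empty_right set_append set_empty2 subset_singletonD Un_upper1)
    have "set (x' @ y') = {l}" using hy(2) by (simp add: set_replicate_conv_if)
    then have sy: "set y' = {l}" using hy(3) by (metis Un_empty_left set_append set_empty2 subset_singletonD Un_upper2)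
    have "set (x @ y') \<subseteq> {j}" using jm by (simp add: set_replicate_conv_if)
    then show "i = l" using sx sy by auto
  qed
  moreover have "f ` {0..n} \<subseteq> nonterms G" using f by blast
  moreover have "finite (nonterms G)" using G by (simp add: rl_grammar_def)
  ultimately have "card {0..n} \<le> card (nonterms G)" by (meson card_inj_on_le)
  then show ?thesis by simp
qed


lemma win_nth: "take k (drop j w) = replicate k c \<Longrightarrow> q < k \<Longrightarrow> j + q < length w \<Longrightarrow> w ! (j+q) = c"
proof -
  assume a: "take k (drop j w) = replicate k c" "q < k" "j + q < length w"
  have "take k (drop j w) ! q = w ! (j+q)" using a(2,3) by simp
  then show ?thesis using a by simp
qed

lemma uniform:
  assumes k: "k \<ge> 2" and len: "length w \<ge> k"
    and win: "\<And>j. j \<le> length w - k \<Longrightarrow> \<exists>c. take k (drop j w) = replicate k c"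
  shows "w = replicate (length w) (w ! 0)"
proof -
  have step: "\<forall>q<k. w ! (j+q) = w ! 0" if "j \<le> length w - k" for j
    using that
  proof (induction j)
    case 0
    obtain c where c: "take k (drop 0 w) = replicate k c" using win by blast
    have "w \<noteq> []" using k len by auto
    then have c0: "w ! (0+0) = c" using win_nth[OF c, of 0] k len by simp
    show ?case
    proof (intro allI impI)
      fix q assume q: "q < k"
      have "w ! (0+q) = c" using win_nth[OF c, of q] len q by simp
      then show "w ! (0+q) = w ! 0" using c0 by simp
    qed
  next
    case (Suc j)
    then have IH: "\<forall>q<k. w ! (j+q) = w ! 0" by simp
    obtain c where c: "take k (drop (Suc j) w) = replicate k c" using win Suc.prems by blast
    have "w ! (Suc j + 0) = c" using win_nth[OF c, of 0] k Suc.prems len by simp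
    moreover have "w ! (j + 1) = w ! 0" using IH[rule_format, of 1] k by simp
    ultimately have c0: "c = w ! 0" by simp
    show ?case
    proof (intro allI impI)
      fix q assume q: "q < k"
      have "Suc j + q < length w" using Suc.prems q len by linarith
      then have "w ! (Suc j+q) = c" using win_nth[OF c, of q] q by simp
      then show "w ! (Suc j+q) = w ! 0" using c0 by simp
    qed
  qed
  show ?thesis
  proof (rule nth_equalityI)
    show "length w = length (replicate (length w) (w ! 0))" by simp
    fix p assume p: "p < length w"
    show "w ! p = replicate (length w) (w ! 0) ! p"
    proof (cases "p \<le> length w - k")
      case True
      then show ?thesis using step[OF True, rule_format, of 0] k p by simp
    next
      case False
      have "w ! (length w - k + (p - (length w - k))) = w ! 0"
        using step[of "length w - k", rule_format, of "p - (length w - k)"] False p by simp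
      then show ?thesis using False p by simp
    qed
  qed
qed

lemma Ln_SLT: assumes k: "k \<ge> 2" shows "Ln n \<in> SLT_k k"
proof -
  define V where "V = {0..n}"
  define B where "B = {replicate k i | i. i \<le> n}"
  define F where "F = {replicate j i | i j. i \<le> n \<and> 1 \<le> j \<and> j \<le> k - 1}"
  have eq: "Ln n = slt V k B B B F"
  proof
    show "Ln n \<subseteq> slt V k B B B F"
    proof
      fix w assume "w \<in> Ln n"
      then obtain i m where w: "w = replicate m i" "i \<le> n" "1 \<le> m" unfolding Ln_def by blast
      show "w \<in> slt V k B B B F"
      proof (cases "m < k")
        case True
        then have "w \<in> F" using w unfolding F_def by force
        then show ?thesis unfolding slt_def by blast
      next
        case False
        have "take k (drop j w) \<in> B" if "j \<le> m - k" for j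
          using that False w unfolding B_def by (auto simp: min_def)
        moreover have "w \<in> lists V" using w unfolding V_def by (auto simp: set_replicate_conv_if)
        moreover have "drop (length w - k) w \<in> B" using False w unfolding B_def by auto
        ultimately show ?thesis unfolding slt_def using False w
          by (auto simp del: take_drop intro!: disjI2)
      qed
    qed
  next
    show "slt V k B B B F \<subseteq> Ln n"
    proof
      fix w assume "w \<in> slt V k B B B F"
      then consider "w \<in> F" | "w \<in> lists V" "length w \<ge> k" "take k w \<in> B"
         "\<forall>j. 1 \<le> j \<and> j \<le> length w - k - 1 \<longrightarrow> take k (drop j w) \<in> B"
         "drop (length w - k) w \<in> B" unfolding slt_def by blast
      then show "w \<in> Ln n"
      proof cases
        case 1 then show ?thesis unfolding F_def Ln_def by blast
      next
        case 2
        note H = 2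
        have win: "\<exists>c. take k (drop j w) = replicate k c" if jj: "j \<le> length w - k" for j
        proof -
          consider "j = 0" | "1 \<le> j \<and> j \<le> length w - k - 1" | "j = length w - k" using jj by arith
          then show ?thesis
          proof cases
            case 1 then show ?thesis using H(3) unfolding B_def by auto
          next
            case 2 then show ?thesis using H(4) unfolding B_def by blast
          next
            case 3
            have "take k (drop j w) = drop (length w - k) w" using 3 H by simp
            then show ?thesis using H(5) unfolding B_def by auto
          qed
        qed
        have u: "w = replicate (length w) (w ! 0)" using uniform[OF k 2(2) win] by blast
        have "w \<noteq> []" using 2 k by auto
        then have "w ! 0 \<in> V" using 2 by (auto simp: in_lists_conv_set)
        then show ?thesis using u 2 k unfolding Ln_def V_def
          by (intro CollectI exI[of _ "w ! 0"] exI[of _ "length w"]) auto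
      qed
    qed
  qed
  have "B \<subseteq> {w \<in> lists V. length w = k}" unfolding B_def V_def
    by (auto simp: in_lists_conv_set dest: in_set_replicate[THEN iffD1])
  moreover have "F \<subseteq> {w \<in> lists V. length w \<le> k - 1}" unfolding F_def V_def
    by (auto simp: in_lists_conv_set dest: in_set_replicate[THEN iffD1])
  moreover have "finite V" unfolding V_def by simp
  ultimately show ?thesis unfolding SLT_k_def using eq
    by (intro CollectI exI[of _ V] exI[of _ B] exI[of _ F]) simp
qed


definition P0 :: language where "P0 = {replicate (2*m) 0 | m. True}"

definition G0 :: rlgrammar where
  "G0 = \<lparr>nonterms = {0}, terms = {0}, rules = {(0,[0,0],Some 0),(0,[],None)}, start = 0\<rparr>"

lemma G0_ok: "rl_grammar G0" unfolding rl_grammar_def G0_def by auto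

lemma G0_lang: "lang G0 = P0"
proof
  have "\<exists>m. w = replicate (2*m) 0" if "derives G0 A w" for A w
    using that
  proof (induction rule: derives.induct)
    case (term_rule A w)
    then show ?case unfolding G0_def by (auto intro: exI[of _ 0])
  next
    case (cont_rule A w B v)
    then obtain m where "v = replicate (2*m) 0" by blast
    moreover have "w = [0,0]" using cont_rule.hyps(1) unfolding G0_def by auto
    ultimately have "w @ v = replicate (2 * Suc m) 0" by simp
    then show ?case by blast
  qed
  then show "lang G0 \<subseteq> P0" unfolding lang_def P0_def by blast
next
  have "derives G0 0 (replicate (2*m) 0)" for m
  proof (induction m)
    case 0
    have "(0, [], None) \<in> rules G0" unfolding G0_def by simp
    then show ?case using derives.term_rule by fastforce
  next
    case (Suc m)
    have "(0, [0,0], Some 0) \<in> rules G0" unfolding G0_def by simp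
    from derives.cont_rule[OF this Suc.IH] show ?case by simp
  qed
  then show "P0 \<subseteq> lang G0" unfolding lang_def P0_def G0_def by auto
qed

lemma Var_le: "rl_grammar G \<Longrightarrow> lang G = L \<Longrightarrow> Var_RL L \<le> card (nonterms G)"
  unfolding Var_RL_def by (rule Least_le) blast

lemma P0_RL: "n \<ge> 1 \<Longrightarrow> P0 \<in> RL_n n"
proof -
  assume n: "n \<ge> 1"
  have "Var_RL P0 \<le> card (nonterms G0)" using Var_le[OF G0_ok G0_lang] .
  also have "\<dots> = 1" unfolding G0_def by simp
  finally show ?thesis using n G0_ok G0_lang unfolding RL_n_def regular_def by auto
qed

lemma RL_small: assumes "L \<in> RL_n n" shows "\<exists>G. rl_grammar G \<and> lang G = L \<and> card (nonterms G) \<le> n"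
proof -
  from assms obtain G where G: "rl_grammar G" "lang G = L" unfolding RL_n_def regular_def by blast
  have "\<exists>G. rl_grammar G \<and> lang G = L \<and> card (nonterms G) = Var_RL L"
    unfolding Var_RL_def by (rule LeastI_ex) (use G in blast)
  then show ?thesis using assms unfolding RL_n_def by auto
qed

lemma Ln_not_RL: "Ln n \<notin> RL_n n"
proof
  assume "Ln n \<in> RL_n n"
  then obtain G where "rl_grammar G" "lang G = Ln n" "card (nonterms G) \<le> n" using RL_small by blast
  then show False using not_small by fastforce
qed

lemma P0_not_SLT: assumes k: "k \<ge> 1" shows "P0 \<notin> SLT_k k"
proof
  assume "P0 \<in> SLT_k k"
  then obtain V B I E F where eq: "P0 = slt V k B I E F"
    and F: "F \<subseteq> {w \<in> lists V. length w \<le> k - 1}" unfolding SLT_k_def by blast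
  let ?w = "replicate (2*(k+1)) (0::nat)"
  have "?w \<in> P0" unfolding P0_def by blast
  moreover have "?w \<notin> F" using F k by auto
  ultimately have h: "?w \<in> lists V" "take k ?w \<in> B"
      "\<forall>j. 1 \<le> j \<and> j \<le> length ?w - k - 1 \<longrightarrow> take k (drop j ?w) \<in> I"
      "drop (length ?w - k) ?w \<in> E" unfolding eq slt_def by auto
  have V: "0 \<in> V" using h(1) k by auto
  have RB: "replicate k 0 \<in> B" using h(2) unfolding take_replicate by (simp add: min_def)
  have "take k (drop 1 ?w) \<in> I" using h(3)[rule_format, of 1] k by simp
  then have RI: "replicate k 0 \<in> I" unfolding drop_replicate take_replicate by (simp add: min_def)
  have RE: "replicate k 0 \<in> E" using h(4) by simp
  let ?v = "replicate (2*k+1) (0::nat)"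
  have "?v \<in> slt V k B I E F" unfolding slt_def
  proof (intro UnI2 CollectI conjI allI impI)
    show "?v \<in> lists V" using V by (auto simp: in_lists_conv_set)
    show "k \<le> length ?v" by simp
    show "take k ?v \<in> B" using RB unfolding take_replicate by (simp add: min_def)
    fix j assume jj: "1 \<le> j \<and> j \<le> length ?v - k - 1"
    then have "j \<le> k" by simp
    then have "min k (2*k+1-j) = k" by (simp add: min_def)
    then show "take k (drop j ?v) \<in> I" using RI unfolding drop_replicate take_replicate by simp
  next
    show "drop (length ?v - k) ?v \<in> E" using RE unfolding drop_replicate length_replicate by simp
  qed
  then have "?v \<in> P0" using eq by simp
  then obtain m where "?v = replicate (2*m) 0" unfolding P0_def by blast
  then have "2*k+1 = 2*m" by (metis length_replicate)
  then show False by presburger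
qed

theorem mainTheorem13:
  shows "(\<forall>k n. k \<ge> 2 \<and> n \<ge> 1 \<longrightarrow>
            \<not> SLT_k k \<subseteq> RL_n n \<and> \<not> RL_n n \<subseteq> SLT_k k)
       \<and> (\<forall>n. n \<ge> 1 \<longrightarrow> \<not> SLT \<subseteq> RL_n n \<and> \<not> RL_n n \<subseteq> SLT)"
proof (intro conjI allI impI)
  fix k n :: nat assume a: "k \<ge> 2 \<and> n \<ge> 1"
  show "\<not> SLT_k k \<subseteq> RL_n n" using Ln_SLT[of k n] Ln_not_RL[of n] a by blast
  show "\<not> RL_n n \<subseteq> SLT_k k" using P0_RL[of n] P0_not_SLT[of k] a by auto
next
  fix n :: nat assume a: "n \<ge> 1"
  have "Ln n \<in> SLT" using Ln_SLT[of 2 n] unfolding SLT_def by (intro UN_I[of 2]) auto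
  then show "\<not> SLT \<subseteq> RL_n n" using Ln_not_RL[of n] by blast
  have "P0 \<notin> SLT" using P0_not_SLT unfolding SLT_def by auto
  then show "\<not> RL_n n \<subseteq> SLT" using P0_RL[OF a] by blast
qed

end
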